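(* If a square matrix $A$ has a $k\times k$ principal submatrix $A[\kappa]$ that is an invertible, Hurwitz-unstable $P^-_0$ matrix and that has a Hurwitz-stable $(k-1)\times(k-1)$ principal submatrix, then $A$ is $D$-Hopf.
   Context: Hurwitz-stable: all eigenvalues have negative real part; Hurwitz-unstable: at least one eigenvalue has positive real part. $P^-_0$ matrix: every nonzero $j\times j$ principal minor has sign $(-1)^j$. Inertia: numbers of eigenvalues with negative, positive, zero real part. $A$ is $D$-Hopf if there exist an invertible principal submatrix $A[\kappa']$ and positive diagonal $D_1,D_2$ with $\operatorname{inertia}(A[\kappa']D_1)\ne\operatorname{inertia}(A[\kappa']D_2)$. *)

theory Defs
  imports "Jordan_Normal_Form.Jordan_Normal_Form" "Jordan_Normal_Form.DL_Submatrix"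
begin

definition principal_submatrix :: "real mat \<Rightarrow> nat set \<Rightarrow> real mat" where
  "principal_submatrix A K = submatrix A K K"

definition cchar_poly :: "real mat \<Rightarrow> complex poly" where
  "cchar_poly A = char_poly (map_mat complex_of_real A)"

definition hurwitz_stable :: "real mat \<Rightarrow> bool" where
  "hurwitz_stable A \<longleftrightarrow> (\<forall>z. eigenvalue (map_mat complex_of_real A) z \<longrightarrow> Re z < 0)"

definition hurwitz_unstable :: "real mat \<Rightarrow> bool" where
  "hurwitz_unstable A \<longleftrightarrow> (\<exists>z. eigenvalue (map_mat complex_of_real A) z \<and> Re z > 0)"

definition P0_minus :: "real mat \<Rightarrow> bool" where
  "P0_minus A \<longleftrightarrow> (\<forall>K. K \<subseteq> {..<dim_row A} \<and> K \<noteq> {} \<longrightarrow>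
     det (principal_submatrix A K) \<noteq> 0 \<longrightarrow>
     sgn (det (principal_submatrix A K)) = (-1) ^ card K)"

definition inertia :: "real mat \<Rightarrow> nat \<times> nat \<times> nat" where
  "inertia A = (let p = cchar_poly A in
     ((\<Sum>z\<in>{z. poly p z = 0 \<and> Re z < 0}. order z p),
      (\<Sum>z\<in>{z. poly p z = 0 \<and> Re z > 0}. order z p),
      (\<Sum>z\<in>{z. poly p z = 0 \<and> Re z = 0}. order z p)))"

definition pos_diagonal :: "nat \<Rightarrow> real mat \<Rightarrow> bool" where
  "pos_diagonal m D \<longleftrightarrow> D \<in> carrier_mat m m \<and> diagonal_mat D \<and> (\<forall>i<m. D $$ (i,i) > 0)"

definition D_Hopf :: "real mat \<Rightarrow> bool" where
  "D_Hopf A \<longleftrightarrow> (\<exists>K D1 D2. K \<subseteq> {..<dim_row A} \<and>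
     invertible_mat (principal_submatrix A K) \<and>
     pos_diagonal (card K) D1 \<and> pos_diagonal (card K) D2 \<and>
     inertia (principal_submatrix A K * D1) \<noteq> inertia (principal_submatrix A K * D2))"

end

theory Submission imports "HOL-Analysis.Topology_Euclidean_Space" Defs begin

lemma det_affine_col:
  fixes X Y Z :: "'a :: comm_ring_1 mat"
  assumes X: "X \<in> carrier_mat n n" and Y: "Y \<in> carrier_mat n n" and Z: "Z \<in> carrier_mat n n"
    and j: "j < n"
    and off: "\<And>i l. i < n \<Longrightarrow> l < n \<Longrightarrow> l \<noteq> j \<Longrightarrow> X $$ (i,l) = Y $$ (i,l) \<and> Z $$ (i,l) = Y $$ (i,l)"
    and col: "\<And>i. i < n \<Longrightarrow> X $$ (i,j) = a * Y $$ (i,j) + b * Z $$ (i,j)"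
  shows "det X = a * det Y + b * det Z"
proof -
  have dXY: "mat_delete X i j = mat_delete Y i j" and dZY: "mat_delete Z i j = mat_delete Y i j" if "i < n" for i
    using X Y Z off by (auto simp: mat_delete_def intro!: eq_matI)
  have cXY: "cofactor X i j = cofactor Y i j" and cZY: "cofactor Z i j = cofactor Y i j" if "i < n" for i
    using dXY[OF that] dZY[OF that] by (auto simp: cofactor_def)
  have "det X = (\<Sum>i<n. X $$ (i,j) * cofactor X i j)" by (rule laplace_expansion_column[OF X j])
  also have "\<dots> = (\<Sum>i<n. a * (Y $$ (i,j) * cofactor Y i j) + b * (Z $$ (i,j) * cofactor Z i j))"
    by (rule sum.cong, auto simp: col cXY cZY algebra_simps)
  also have "\<dots> = a * (\<Sum>i<n. Y $$ (i,j) * cofactor Y i j) + b * (\<Sum>i<n. Z $$ (i,j) * cofactor Z i j)"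
    by (simp add: sum.distrib sum_distrib_left)
  also have "\<dots> = a * det Y + b * det Z"
    using laplace_expansion_column[OF Y j] laplace_expansion_column[OF Z j] by simp
  finally show ?thesis .
qed

definition scol :: "real mat \<Rightarrow> nat \<Rightarrow> real \<Rightarrow> real mat" where
  "scol B j e = mat (dim_row B) (dim_col B) (\<lambda>(i,l). if l = j then e * B $$ (i,l) else B $$ (i,l))"

definition dmat :: "nat \<Rightarrow> nat \<Rightarrow> real \<Rightarrow> real mat" where
  "dmat k j e = mat k k (\<lambda>(i,l). if i = l then (if i = j then e else 1) else 0)"

lemma scol_carrier[simp]: "B \<in> carrier_mat k k \<Longrightarrow> scol B j e \<in> carrier_mat k k"
  by (auto simp: scol_def)

lemma scol_one: "scol B j 1 = B"
  by (auto simp: scol_def intro!: eq_matI)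

lemma mult_dmat: assumes B: "B \<in> carrier_mat k k" shows "B * dmat k j e = scol B j e"
proof (rule eq_matI)
  fix i l assume i: "i < dim_row (scol B j e)" and l: "l < dim_col (scol B j e)"
  hence ik: "i < k" and lk: "l < k" using B by (auto simp: scol_def)
  have "(B * dmat k j e) $$ (i,l) = (\<Sum>m\<in>{0..<k}. B $$ (i,m) * (if m = l then (if l = j then e else 1) else 0))"
    using B ik lk by (auto simp: scalar_prod_def dmat_def intro!: sum.cong)
  also have "\<dots> = B $$ (i,l) * (if l = j then e else 1)"
    using lk by (simp add: if_distrib[of "\<lambda>x. _ * x"] cong: if_cong) 
  finally show "(B * dmat k j e) $$ (i,l) = scol B j e $$ (i,l)" using B ik lk by (simp add: scol_def)
qed (use B in \<open>auto simp: scol_def dmat_def\<close>)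

lemma pos_dmat: "e > 0 \<Longrightarrow> pos_diagonal k (dmat k j e)"
  by (auto simp: pos_diagonal_def dmat_def diagonal_mat_def)


lemma cp_eval: assumes "A \<in> carrier_mat k k"
  shows "poly (cchar_poly A) z = det (- char_matrix (map_mat complex_of_real A) z)"
  unfolding cchar_poly_def by (rule char_poly_matrix, use assms in auto)

lemma cp_affine: assumes B: "B \<in> carrier_mat k k" and j: "j < k"
  shows "poly (cchar_poly (scol B j e)) z =
     (1 - complex_of_real e) * poly (cchar_poly (scol B j 0)) z + complex_of_real e * poly (cchar_poly B) z"
proof -
  have "det (- char_matrix (map_mat complex_of_real (scol B j e)) z) =
     (1 - complex_of_real e) * det (- char_matrix (map_mat complex_of_real (scol B j 0)) z)
     + complex_of_real e * det (- char_matrix (map_mat complex_of_real B) z)"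
    by (rule det_affine_col[of _ k _ _ j], use B j in \<open>auto simp: scol_def char_matrix_def algebra_simps\<close>)
  thus ?thesis using B by (simp add: cp_eval[of _ k])
qed

lemma cp0: assumes B: "B \<in> carrier_mat k k" and j: "j < k"
  shows "poly (cchar_poly (scol B j 0)) z = z * poly (cchar_poly (mat_delete B j j)) z"
proof -
  let ?M = "map_mat complex_of_real (scol B j 0)"
  have "char_poly ?M = monom 1 1 * char_poly (mat_delete ?M j j)"
    by (rule char_poly_0_column[of k], use B j in \<open>auto simp: scol_def\<close>)
  moreover have "mat_delete ?M j j = map_mat complex_of_real (mat_delete B j j)"
    using B j by (auto simp: scol_def mat_delete_def intro!: eq_matI)
  ultimately show ?thesis by (simp add: cchar_poly_def poly_monom)
qed

lemma cp_at0: assumes A: "A \<in> carrier_mat m m"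
  shows "poly (cchar_poly A) 0 = (-1)^m * complex_of_real (det A)"
proof -
  have "char_matrix (map_mat complex_of_real A) 0 = map_mat complex_of_real A"
    using A by (auto simp: char_matrix_def intro!: eq_matI)
  moreover have "- map_mat complex_of_real A = (-1) \<cdot>\<^sub>m map_mat complex_of_real A"
    using A by (auto intro!: eq_matI)
  ultimately show ?thesis using A by (simp add: cp_eval[OF A] of_real_hom.hom_det)
qed


lemma pick_del: assumes j: "j < k" and a: "a < k - 1"
  shows "pick ({..<k} - {j}) a = (if a < j then a else Suc a)"
proof -
  let ?I = "{..<k} - {j}"
  let ?x = "if a < j then a else Suc a"
  have xI: "?x \<in> ?I" using j a by auto
  have "{b \<in> ?I. b < ?x} = (if a < j then {..<a} else {..<Suc a} - {j})" using j a by auto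
  hence "card {b \<in> ?I. b < ?x} = a" using j by (auto simp: card_Diff_singleton)
  with pick_card_in_set[OF xI] show ?thesis by simp
qed

lemma sub_delete: assumes B: "B \<in> carrier_mat k k" and j: "j < k"
  shows "submatrix B ({..<k} - {j}) ({..<k} - {j}) = mat_delete B j j"
proof -
  have c: "card {i. i < k \<and> i \<in> {..<k} - {j}} = k - 1"
  proof -
    have "{i. i < k \<and> i \<in> {..<k} - {j}} = {..<k} - {j}" by auto
    thus ?thesis using j by (simp add: card_Diff_singleton)
  qed
  show ?thesis
    using B j c by (auto simp: submatrix_def mat_delete_def pick_del intro!: eq_matI)
qed


lemma eig_bound: assumes B: "B \<in> carrier_mat k k" and e0: "0 \<le> e" and e1: "e \<le> 1"
  and root: "poly (cchar_poly (scol B j e)) z = 0"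
  shows "cmod z \<le> (\<Sum>i<k. \<Sum>l<k. \<bar>B $$ (i,l)\<bar>)"
proof -
  let ?M = "map_mat complex_of_real (scol B j e)"
  have Mc: "?M \<in> carrier_mat k k" using B by auto
  have "eigenvalue ?M z" using root eigenvalue_root_char_poly[OF Mc] by (simp add: cchar_poly_def)
  then obtain v where v: "v \<in> carrier_vec k" "v \<noteq> 0\<^sub>v k" and ev: "?M *\<^sub>v v = z \<cdot>\<^sub>v v"
    using Mc unfolding eigenvalue_def eigenvector_def by auto
  obtain i1 where i1: "i1 < k" "v $ i1 \<noteq> 0" using v by (metis eq_vecI index_zero_vec(1,2) carrier_vecD)
  define m where "m = Max ((\<lambda>i. cmod (v $ i)) ` {..<k})"
  have "m \<in> (\<lambda>i. cmod (v $ i)) ` {..<k}" unfolding m_def using i1 by (intro Max_in) auto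
  then obtain i0 where i0: "i0 < k" "cmod (v $ i0) = m" by auto
  have mx: "cmod (v $ i) \<le> m" if "i < k" for i unfolding m_def using that by (intro Max_ge) auto
  have mpos: "m > 0" using mx[OF i1(1)] i1 by (smt (verit) norm_ge_zero zero_less_norm_iff)
  have "z * v $ i0 = (?M *\<^sub>v v) $ i0" using ev i0 v by simp
  also have "\<dots> = (\<Sum>l<k. ?M $$ (i0,l) * v $ l)"
    using i0 v Mc by (auto simp: scalar_prod_def lessThan_atLeast0 intro!: sum.cong)
  finally have eq: "z * v $ i0 = (\<Sum>l<k. ?M $$ (i0,l) * v $ l)" .
  have "cmod z * m = cmod (z * v $ i0)" using i0 by (simp add: norm_mult)
  also have "\<dots> \<le> (\<Sum>l<k. cmod (?M $$ (i0,l) * v $ l))" unfolding eq by (rule norm_sum)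
  also have "\<dots> \<le> (\<Sum>l<k. \<bar>B $$ (i0,l)\<bar> * m)"
  proof (rule sum_mono)
    fix l assume "l \<in> {..<k}"
    hence l: "l < k" by auto
    have "cmod (?M $$ (i0,l)) \<le> \<bar>B $$ (i0,l)\<bar>"
      using B i0 l e0 e1 by (auto simp: scol_def abs_mult intro: mult_left_le_one_le)
    thus "cmod (?M $$ (i0,l) * v $ l) \<le> \<bar>B $$ (i0,l)\<bar> * m"
      unfolding norm_mult by (intro mult_mono mx l) auto
  qed
  also have "\<dots> = (\<Sum>l<k. \<bar>B $$ (i0,l)\<bar>) * m" by (simp add: sum_distrib_right)
  finally have "cmod z \<le> (\<Sum>l<k. \<bar>B $$ (i0,l)\<bar>)" using mpos by simp
  also have "\<dots> \<le> (\<Sum>i<k. \<Sum>l<k. \<bar>B $$ (i,l)\<bar>)"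
    by (rule member_le_sum[where f = "\<lambda>i. \<Sum>l<k. \<bar>B $$ (i,l)\<bar>"]) (use i0 in \<open>auto intro: sum_nonneg\<close>)
  finally show ?thesis .
qed


lemma analytic:
  fixes p q :: "complex poly" and R :: real
  assumes fnz: "\<And>z. 0 \<le> Re z \<Longrightarrow> poly p z \<noteq> 0"
  and r0: "Re (poly q 0 / poly p 0) > 0"
  and bnd: "\<And>e z. 0 < e \<Longrightarrow> e \<le> 1 \<Longrightarrow>
        (1 - complex_of_real e) * (z * poly p z) + complex_of_real e * poly q z = 0 \<Longrightarrow> cmod z \<le> R"
  shows "\<exists>e. 0 < e \<and> e \<le> 1 \<and> (\<forall>z. (1 - complex_of_real e) * (z * poly p z) + complex_of_real e * poly q z = 0 \<longrightarrow> Re z < 0)"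
proof -
  define H where "H z = z * poly p z - poly q z" for z
  define h where "h z = H z / poly p z" for z
  have p0: "poly p 0 \<noteq> 0" using fnz by simp
  have "Re (h 0) = - Re (poly q 0 / poly p 0)" by (simp add: h_def H_def)
  hence h0: "Re (h 0) < 0" using r0 by simp
  have "continuous (at 0) h" unfolding h_def H_def using p0 by (intro continuous_intros) auto
  hence "continuous (at 0) (\<lambda>z. Re (h z))" by (rule continuous_Re)
  hence "isCont (\<lambda>z. Re (h z)) 0" by (simp add: continuous_at)
  hence "((\<lambda>z. Re (h z)) \<longlongrightarrow> Re (h 0)) (nhds 0)"
    using tendsto_at_iff_tendsto_nhds isCont_def by blast
  hence "eventually (\<lambda>z. Re (h z) < 0) (nhds 0)" using h0 by (rule order_tendstoD(2))
  then obtain \<delta> where dpos: "\<delta> > 0" and dprop: "\<And>z. dist z 0 < \<delta> \<Longrightarrow> Re (h z) < 0"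
    unfolding eventually_nhds_metric by auto
  define S where "S = {z. \<delta> \<le> cmod z \<and> cmod z \<le> R \<and> 0 \<le> Re z}"
  have "closed S" unfolding S_def
    by (intro closed_Collect_conj closed_Collect_le continuous_intros)
  moreover have "bounded S" by (rule bounded_subset[OF bounded_cball[of 0 R]]) (auto simp: S_def)
  ultimately have cS: "compact S" by (simp add: compact_eq_bounded_closed)
  have "\<exists>m M. m > 0 \<and> M \<ge> 0 \<and> (\<forall>z\<in>S. m \<le> cmod (z * poly p z) \<and> cmod (H z) \<le> M)"
  proof (cases "S = {}")
    case True thus ?thesis by (intro exI[of _ 1] exI[of _ 0]) auto
  next
    case False
    have c1: "continuous_on S (\<lambda>z. cmod (z * poly p z))" by (intro continuous_intros)
    have c2: "continuous_on S (\<lambda>z. cmod (H z))" unfolding H_def by (intro continuous_intros)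
    obtain z0 where z0: "z0 \<in> S" "\<forall>y\<in>S. cmod (z0 * poly p z0) \<le> cmod (y * poly p y)"
      using continuous_attains_inf[OF cS False c1] by auto
    obtain z1 where z1: "z1 \<in> S" "\<forall>y\<in>S. cmod (H y) \<le> cmod (H z1)"
      using continuous_attains_sup[OF cS False c2] by auto
    have "z0 \<noteq> 0" using z0(1) dpos by (auto simp: S_def)
    moreover have "poly p z0 \<noteq> 0" using z0(1) fnz by (auto simp: S_def)
    ultimately have "cmod (z0 * poly p z0) > 0" by simp
    thus ?thesis using z0 z1 by (intro exI[of _ "cmod (z0 * poly p z0)"] exI[of _ "cmod (H z1)"]) auto
  qed
  then obtain m M where mM: "m > 0" "M \<ge> 0" "\<And>z. z \<in> S \<Longrightarrow> m \<le> cmod (z * poly p z) \<and> cmod (H z) \<le> M"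
    by blast
  define e where "e = min 1 (m / (M + 1))"
  have epos: "e > 0" and e1: "e \<le> 1" using mM by (auto simp: e_def)
  have eM: "e * M < m"
  proof -
    have "e * M \<le> m / (M + 1) * M" using mM by (intro mult_right_mono) (auto simp: e_def)
    also have "\<dots> < m" using mM by (simp add: field_simps)
    finally show ?thesis .
  qed
  show ?thesis
  proof (intro exI[of _ e] conjI allI impI epos e1)
    fix z assume root: "(1 - complex_of_real e) * (z * poly p z) + complex_of_real e * poly q z = 0"
    show "Re z < 0"
    proof (rule ccontr)
      assume "\<not> Re z < 0"
      hence rz: "0 \<le> Re z" by simp
      have zR: "cmod z \<le> R" using bnd[OF epos e1 root] .
      have key: "z * poly p z = complex_of_real e * H z"
        using root unfolding H_def by (simp add: algebra_simps)
      show False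
      proof (cases "cmod z < \<delta>")
        case True
        hence hz: "Re (h z) < 0" using dprop by simp
        have pz: "poly p z \<noteq> 0" using fnz rz by simp
        have "z = complex_of_real e * h z" using key pz unfolding h_def by (simp add: field_simps)
        hence "Re z = Re (complex_of_real e * h z)" by (rule arg_cong)
        also have "\<dots> = e * Re (h z)" by simp
        also have "\<dots> < 0" using epos hz by (simp add: mult_pos_neg)
        finally show False using rz by simp
      next
        case False
        hence "z \<in> S" using zR rz by (auto simp: S_def)
        hence "m \<le> cmod (z * poly p z)" "cmod (H z) \<le> M" using mM(3) by auto
        hence "m \<le> e * cmod (H z)" using key epos by (simp add: norm_mult)
        also have "\<dots> \<le> e * M" using \<open>cmod (H z) \<le> M\<close> epos by (simp add: mult_left_mono)
        finally show False using eM by simp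
      qed
    qed
  qed
qed


lemma pick_lessThan: "i < k \<Longrightarrow> pick {..<k} i = i"
proof -
  assume i: "i < k"
  have "{a \<in> {..<k}. a < i} = {..<i}" using i by auto
  thus ?thesis using pick_card_in_set[of i "{..<k}"] i by simp
qed

lemma sub_full: assumes B: "B \<in> carrier_mat k k" shows "principal_submatrix B {..<k} = B"
proof -
  have c: "card {i. i < k \<and> i \<in> {..<k}} = k" by simp
  show ?thesis using B c by (auto simp: principal_submatrix_def submatrix_def pick_lessThan intro!: eq_matI)
qed

lemma invertible_det: assumes A: "A \<in> carrier_mat k k" and inv: "invertible_mat A" shows "det A \<noteq> 0"
proof -
  obtain X where AX: "A * X = 1\<^sub>m k" and XA: "X * A = 1\<^sub>m (dim_row X)"
    using inv A unfolding invertible_mat_def inverts_mat_def by auto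
  have "dim_col X = k" using AX by (metis index_mult_mat(3) index_one_mat(3))
  moreover have "dim_row X = k" using XA A by (metis carrier_matD(2) index_mult_mat(3) index_one_mat(3))
  ultimately have X: "X \<in> carrier_mat k k" by auto
  have "det A * det X = 1" using det_mult[OF A X] AX by simp
  thus ?thesis by auto
qed

lemma L1: fixes \<kappa> :: "nat set" assumes kap: "\<kappa> \<subseteq> {..<n}" shows "{i. i < n \<and> i \<in> \<kappa>} = \<kappa>"
proof -
  have "i < n" if "i \<in> \<kappa>" for i using kap that by auto
  thus ?thesis by auto
qed
lemma L2: fixes A :: "real mat" and \<kappa> :: "nat set"
  assumes An: "A \<in> carrier_mat n n"
    and kap: "\<kappa> \<subseteq> {..<n}"
  shows "principal_submatrix A \<kappa> \<in> carrier_mat (card \<kappa>) (card \<kappa>)"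
proof -
  have dA: "dim_row A = n" "dim_col A = n" using An by auto
  have e: "{i. i < n \<and> i \<in> \<kappa>} = \<kappa>" by (rule L1[OF kap])
  show ?thesis using dim_submatrix[of A \<kappa> \<kappa>] unfolding principal_submatrix_def carrier_mat_def dA e by simp
qed

theorem mainTheorem8:
  fixes A :: "real mat" and n :: nat and \<kappa> :: "nat set"
  assumes "A \<in> carrier_mat n n"
    and "\<kappa> \<subseteq> {..<n}"
    and "invertible_mat (principal_submatrix A \<kappa>)"
    and "hurwitz_unstable (principal_submatrix A \<kappa>)"
    and "P0_minus (principal_submatrix A \<kappa>)"
    and "\<exists>\<mu>. \<mu> \<subseteq> {..<card \<kappa>} \<and> card \<mu> = card \<kappa> - 1 \<and>
           hurwitz_stable (principal_submatrix (principal_submatrix A \<kappa>) \<mu>)"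
  shows "D_Hopf A"
proof -
  note An = assms(1) and kap = assms(2)
  define B where "B = principal_submatrix A \<kappa>"
  define k where "k = card \<kappa>"
  have Bc: "B \<in> carrier_mat k k" unfolding B_def k_def by (rule L2[OF An kap])
  obtain \<mu> where mu: "\<mu> \<subseteq> {..<k}" "card \<mu> = k - 1" and st: "hurwitz_stable (principal_submatrix B \<mu>)"
    using assms(6) unfolding B_def k_def by auto
  obtain z0 where z0: "eigenvalue (map_mat complex_of_real B) z0" "Re z0 > 0"
    using assms(4) unfolding B_def hurwitz_unstable_def by auto
  have BcC: "map_mat complex_of_real B \<in> carrier_mat k k" using Bc by simp
  have kpos: "k > 0" by (rule eigenvalue_imp_nonzero_dim[OF BcC z0(1)])
  have "\<mu> \<noteq> {..<k}" using mu kpos by auto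
  then obtain j where j: "j < k" "j \<notin> \<mu>" using mu by auto
  have "\<mu> \<subseteq> {..<k} - {j}" using mu j by auto
  moreover have "card ({..<k} - {j}) = card \<mu>" using j mu by (simp add: card_Diff_singleton)
  ultimately have mueq: "\<mu> = {..<k} - {j}" by (intro card_subset_eq) auto
  define C where "C = mat_delete B j j"
  have CB: "principal_submatrix B \<mu> = C"
    unfolding C_def principal_submatrix_def mueq by (rule sub_delete[OF Bc j(1)])
  have Cc: "C \<in> carrier_mat (k - 1) (k - 1)" unfolding C_def using Bc by (rule mat_delete_carrier)
  define p where "p = cchar_poly C"
  define q where "q = cchar_poly B"
  have fnz: "poly p z \<noteq> 0" if "0 \<le> Re z" for z
  proof
    assume "poly p z = 0"
    hence "eigenvalue (map_mat complex_of_real C) z"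
      using eigenvalue_root_char_poly[of "map_mat complex_of_real C" "k - 1"] Cc unfolding p_def cchar_poly_def by simp
    hence "Re z < 0" using st unfolding CB hurwitz_stable_def by auto
    thus False using that by simp
  qed
  have p0: "poly p 0 = (-1)^(k-1) * complex_of_real (det C)" unfolding p_def by (rule cp_at0[OF Cc])
  have q0: "poly q 0 = (-1)^k * complex_of_real (det B)" unfolding q_def by (rule cp_at0[OF Bc])
  have dC: "det C \<noteq> 0" using fnz[of 0] p0 by auto
  have dB: "det B \<noteq> 0" using invertible_det[OF Bc] assms(3) unfolding B_def by simp
  have P0: "P0_minus B" using assms(5) unfolding B_def by simp
  have dimB: "dim_row B = k" using Bc by simp
  have P0': "sgn (det (principal_submatrix B K)) = (-1)^card K"
    if "K \<subseteq> {..<k}" "K \<noteq> {}" "det (principal_submatrix B K) \<noteq> 0" for K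
    using P0 that unfolding P0_minus_def dimB by blast
  have sB: "sgn (det B) = (-1)^k"
  proof -
    have ne: "{..<k} \<noteq> {}" using kpos by auto
    show ?thesis using P0'[of "{..<k}"] ne dB sub_full[OF Bc] by simp
  qed
  have sC: "sgn (det C) = (-1)^(k-1)"
  proof (cases "\<mu> = {}")
    case True
    hence "k - 1 = 0" using mu by simp
    hence "C = 1\<^sub>m 0" using Cc by (auto intro!: eq_matI)
    thus ?thesis using \<open>k - 1 = 0\<close> by simp
  next
    case False
    show ?thesis using P0'[OF mu(1) False] dC mu(2) CB by simp
  qed
  obtain k' where k': "k = Suc k'" using kpos by (cases k) auto
  have neg: "det B / det C < 0"
  proof -
    have sg: "sgn (det B) = - sgn (det C)" using sB sC k' by simp
    show ?thesis
    proof (cases "det B > 0")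
      case True
      hence "sgn (det C) = -1" using sg by simp
      hence "det C < 0" by (simp add: sgn_real_def split: if_splits)
      thus ?thesis using True by (simp add: divide_pos_neg)
    next
      case False
      hence "det B < 0" using dB by simp
      hence "sgn (det C) = 1" using sg by simp
      hence "det C > 0" by (simp add: sgn_real_def split: if_splits)
      thus ?thesis using \<open>det B < 0\<close> by (simp add: divide_neg_pos)
    qed
  qed
  define s :: complex where "s = (-1)^k'"
  have s0: "s \<noteq> 0" unfolding s_def by simp
  have q0': "poly q 0 = s * (- complex_of_real (det B))" using q0 unfolding k' s_def by simp
  have p0': "poly p 0 = s * complex_of_real (det C)" using p0 unfolding k' s_def by simp
  have "poly q 0 / poly p 0 = (- complex_of_real (det B)) / complex_of_real (det C)"
    unfolding q0' p0' using s0 by (rule mult_divide_mult_cancel_left)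
  also have "\<dots> = complex_of_real (- (det B / det C))" by simp
  finally have eqc: "poly q 0 / poly p 0 = complex_of_real (- (det B / det C))" .
  have "Re (poly q 0 / poly p 0) = - (det B / det C)" unfolding eqc by (rule Re_complex_of_real)
  hence r0: "Re (poly q 0 / poly p 0) > 0" using neg by linarith
  define R where "R = (\<Sum>i<k. \<Sum>l<k. \<bar>B $$ (i,l)\<bar>)"
  have charpol: "poly (cchar_poly (scol B j e)) z =
      (1 - complex_of_real e) * (z * poly p z) + complex_of_real e * poly q z" for e z
    unfolding cp_affine[OF Bc j(1), where e=e and z=z] cp0[OF Bc j(1)] p_def q_def C_def ..
  have bnd: "cmod z \<le> R" if "0 < e" "e \<le> 1"
    "(1 - complex_of_real e) * (z * poly p z) + complex_of_real e * poly q z = 0" for e z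
  proof -
    have rt: "poly (cchar_poly (scol B j e)) z = 0" unfolding charpol by (rule that(3))
    show ?thesis unfolding R_def by (rule eig_bound[OF Bc less_imp_le[OF that(1)] that(2) rt])
  qed
  obtain e where eall: "0 < e \<and> e \<le> 1 \<and> (\<forall>z. (1 - complex_of_real e) * (z * poly p z) + complex_of_real e * poly q z = 0 \<longrightarrow> Re z < 0)"
    using analytic[of p q R, OF fnz r0 bnd] by (rule exE)
  have e: "0 < e" "e \<le> 1" using eall by (rule conjunct1, rule conjunct1[OF conjunct2])
  have stab: "Re z < 0" if "(1 - complex_of_real e) * (z * poly p z) + complex_of_real e * poly q z = 0" for z
    by (rule conjunct2[OF conjunct2[OF eall], rule_format, OF that])
  have pos1: "pos_diagonal k (1\<^sub>m k)" by (auto simp: pos_diagonal_def diagonal_mat_def)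
  have pos2: "pos_diagonal k (dmat k j e)" by (rule pos_dmat[OF e(1)])
  have B1: "B * 1\<^sub>m k = B" using Bc by simp
  have B2: "B * dmat k j e = scol B j e" by (rule mult_dmat[OF Bc])
  have empty: "{z. poly (cchar_poly (scol B j e)) z = 0 \<and> Re z > 0} = {}"
  proof -
    have False if "poly (cchar_poly (scol B j e)) z = 0" "Re z > 0" for z
    proof -
      have "(1 - complex_of_real e) * (z * poly p z) + complex_of_real e * poly q z = 0"
        using that(1) unfolding charpol .
      hence "Re z < 0" by (rule stab)
      thus False using that(2) by simp
    qed
    thus ?thesis by blast
  qed
  have qnz: "q \<noteq> 0"
    using degree_monic_char_poly[OF BcC] unfolding q_def cchar_poly_def by auto
  have qz0: "poly q z0 = 0" using z0(1) eigenvalue_root_char_poly[OF BcC] unfolding q_def cchar_poly_def by simp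
  have fin: "finite {z. poly q z = 0 \<and> Re z > 0}" using poly_roots_finite[OF qnz] by (rule finite_subset[rotated]) auto
  have "0 < order z0 q" using qz0 qnz order_root by auto
  also have "order z0 q \<le> (\<Sum>z\<in>{z. poly q z = 0 \<and> Re z > 0}. order z q)"
    by (rule member_le_sum) (use fin qz0 z0 in auto)
  finally have possum: "0 < (\<Sum>z\<in>{z. poly q z = 0 \<and> Re z > 0}. order z q)" .
  have "inertia (B * 1\<^sub>m k) \<noteq> inertia (B * dmat k j e)"
  proof
    assume "inertia (B * 1\<^sub>m k) = inertia (B * dmat k j e)"
    hence "fst (snd (inertia B)) = fst (snd (inertia (scol B j e)))" unfolding B1 B2 by simp
    thus False using possum unfolding inertia_def Let_def empty q_def by simp
  qed
  note ineq = this
  have "\<kappa> \<subseteq> {..<dim_row A}" using kap An by auto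
  then show ?thesis unfolding D_Hopf_def
    using assms(3) pos1 pos2 ineq unfolding B_def k_def by blast
qed

end
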